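(* Let $S\subset \mathbb{R}^2$ be such that $S$ and $S^\mathsf{c}$ satisfy the $r$-rolling condition. Then for every $\alpha>0$, any open ball of radius $\alpha$ with center in $S$ contains an open ball of radius $\tfrac12 \min\{\alpha,r\}$ which is included in $S$.
   Context: A set $T\subset\mathbb{R}^2$ satisfies the $r$-rolling condition ($r>0$) if for every $x \in \partial T$ there is an open ball $B$ of radius $r$ with $B \cap T = \emptyset$ and $x \in \partial B$. $S^\mathsf{c}=\mathbb{R}^2\setminus S$. *)

theory Defs
  imports "HOL-Analysis.Analysis"
begin

definition rolling :: "real \<Rightarrow> (real^2) set \<Rightarrow> bool" where
  "rolling r T \<longleftrightarrow> (\<forall>x\<in>frontier T. \<exists>c. ball c r \<inter> T = {} \<and> x \<in> frontier (ball c r))"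

end

theory Submission
  imports Defs
begin

lemma ballA:
  fixes x :: "'a::euclidean_space"
  assumes "x \<in> S" "\<And>q. q \<in> frontier S \<Longrightarrow> e \<le> dist x q"
  shows "ball x e \<subseteq> S"
proof
  fix z assume z: "z \<in> ball x e"
  show "z \<in> S"
  proof (rule ccontr)
    assume "z \<notin> S"
    have "closed_segment x z \<inter> frontier S \<noteq> {}"
      by (rule connected_Int_frontier) (use assms(1) \<open>z \<notin> S\<close> in auto)
    then obtain q where q: "q \<in> closed_segment x z" "q \<in> frontier S" by auto
    have "q \<in> ball x e" using q(1) z convex_ball[of x e] centre_in_ball
      by (metis closed_segment_subset dist_self empty_iff mem_ball subset_iff ball_empty not_le)
    then show False using assms(2)[OF q(2)] by simp
  qed
qed

theorem lemma1:
  fixes S :: "(real^2) set" and r :: real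
  assumes "r > 0"
    and "rolling r S"
    and "rolling r (- S)"
  shows "\<forall>\<alpha>>0. \<forall>x\<in>S. \<exists>y. ball y (min \<alpha> r / 2) \<subseteq> ball x \<alpha> \<and> ball y (min \<alpha> r / 2) \<subseteq> S"
proof (intro allI impI ballI)
  fix \<alpha> :: real and x assume a: "\<alpha> > 0" and x: "x \<in> S"
  define \<rho> where "\<rho> = min \<alpha> r / 2"
  have rp: "\<rho> > 0" "\<rho> \<le> r/2" "2*\<rho> \<le> \<alpha>" using a assms(1) by (auto simp: \<rho>_def)
  have "\<exists>y. ball y \<rho> \<subseteq> ball x \<alpha> \<and> ball y \<rho> \<subseteq> S"
  proof (cases "\<forall>q\<in>frontier S. \<rho> \<le> dist x q")
    case True
    then have "ball x \<rho> \<subseteq> S" using ballA[OF x] by blast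
    moreover have "ball x \<rho> \<subseteq> ball x \<alpha>" using rp by (intro subset_ball) auto
    ultimately show ?thesis by blast
  next
    case False
    then have ne: "frontier S \<noteq> {}" by auto
    obtain p where p: "p \<in> frontier S" and pmin: "\<And>q. q \<in> frontier S \<Longrightarrow> dist x p \<le> dist x q"
      using distance_attains_inf[OF frontier_closed ne] by metis
    define d where "d = dist x p"
    have dlt: "d < \<rho>" using False pmin d_def by force
    have d0: "d \<ge> 0" by (simp add: d_def)
    have bxd: "ball x d \<subseteq> S" using ballA[OF x] pmin d_def by blast
    obtain c' where c': "ball c' r \<inter> S = {}" "p \<in> frontier (ball c' r)"
      using assms(2) p unfolding rolling_def by blast
    obtain c where c: "ball c r \<inter> - S = {}" "p \<in> frontier (ball c r)"
      using assms(3) p frontier_complement[of S] unfolding rolling_def by metis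
    have dc': "dist c' p = r" using c'(2) assms(1) by (simp add: frontier_ball)
    have dc: "dist c p = r" using c(2) assms(1) by (simp add: frontier_ball)
    have bc: "ball c r \<subseteq> S" using c(1) by auto
    have disj: "ball c r \<inter> ball c' r = {}" using bc c'(1) by auto
    have "dist c c' \<ge> 2*r"
    proof (rule ccontr)
      assume h: "\<not> ?thesis"
      define m where "m = midpoint c c'"
      have "m \<in> ball c r" "m \<in> ball c' r" using h
        by (auto simp: m_def dist_midpoint)
      then show False using disj by auto
    qed
    moreover have "dist c c' \<le> dist c p + dist p c'" by (rule dist_triangle)
    ultimately have "dist c c' = dist c p + dist p c'" using dc dc' by (simp add: dist_commute)
    then have "norm (c - p) *\<^sub>R (p - c') = norm (p - c') *\<^sub>R (c - p)"
      using dist_triangle_eq by blast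
    then have "r *\<^sub>R (p - c') = r *\<^sub>R (c - p)" using dc dc'
      by (simp add: dist_norm norm_minus_commute)
    then have cp: "c - p = p - c'" using assms(1) by simp
    have xc': "dist x c' = d + r"
    proof (cases "d = 0")
      case True then show ?thesis using dc' d_def by (simp add: dist_commute)
    next
      case False
      then have dpos: "d > 0" using d0 by simp
      have "dist x c' \<ge> d + r"
      proof (rule ccontr)
        assume h: "\<not> ?thesis"
        define m where "m = x + (d/(d+r)) *\<^sub>R (c' - x)"
        have "dist x m = (d/(d+r)) * dist x c'" using dpos assms(1)
          by (simp add: m_def dist_norm norm_minus_commute)
        also have "\<dots> < (d/(d+r)) * (d+r)" using h dpos assms(1)
          by (intro mult_strict_left_mono) auto
        also have "\<dots> = d" using dpos assms(1) by simp
        finally have m1: "m \<in> ball x d" by simp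
        have "c' - m = (r/(d+r)) *\<^sub>R (c' - x)" using dpos assms(1)
          by (simp add: m_def algebra_simps divide_simps) (simp add: scaleR_left_distrib[symmetric] add_divide_distrib[symmetric])
        then have "dist c' m = (r/(d+r)) * dist x c'" using dpos assms(1)
          by (simp add: dist_norm norm_minus_commute)
        also have "\<dots> < (r/(d+r)) * (d+r)" using h dpos assms(1)
          by (intro mult_strict_left_mono) auto
        also have "\<dots> = r" using dpos assms(1) by simp
        finally have "m \<in> ball c' r" by simp
        then show False using m1 bxd c'(1) by blast
      qed
      moreover have "dist x c' \<le> dist x p + dist p c'" by (rule dist_triangle)
      ultimately show ?thesis using dc' d_def by (simp add: dist_commute)
    qed
    then have "dist x c' = dist x p + dist p c'" using dc' d_def by (simp add: dist_commute)
    then have "norm (x - p) *\<^sub>R (p - c') = norm (p - c') *\<^sub>R (x - p)"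
      using dist_triangle_eq by blast
    then have "d *\<^sub>R (p - c') = r *\<^sub>R (x - p)" using dc' d_def
      by (simp add: dist_norm norm_minus_commute)
    then have xp: "x - p = (d/r) *\<^sub>R (p - c')" using assms(1)
      by (metis (no_types, lifting) divide_inverse_commute less_irrefl scaleR_scaleR
            inverse_eq_divide right_inverse scaleR_one divide_self_if)
    define u where "u = p - c'"
    have nu: "norm u = r" using dc' by (simp add: u_def dist_norm norm_minus_commute)
    define y where "y = p + (\<rho>/r) *\<^sub>R u"
    have "c - y = (1 - \<rho>/r) *\<^sub>R u" using cp by (simp add: y_def u_def algebra_simps)
    then have "dist c y = (1 - \<rho>/r) * r" using rp assms(1) nu
      by (simp add: dist_norm)
    also have "\<dots> = r - \<rho>" using assms(1) by (simp add: algebra_simps)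
    finally have "ball y \<rho> \<subseteq> ball c r" by (simp add: ball_subset_ball_iff dist_commute)
    moreover have "x - y = ((d - \<rho>)/r) *\<^sub>R u" using xp
      by (simp add: y_def u_def algebra_simps diff_divide_distrib)
    then have "dist x y = \<bar>(d - \<rho>)/r\<bar> * r" using nu by (simp add: dist_norm)
    then have "dist x y = \<rho> - d" using assms(1) dlt by simp
    then have "ball y \<rho> \<subseteq> ball x \<alpha>" using rp d0 by (simp add: ball_subset_ball_iff dist_commute)
    ultimately show ?thesis using bc by blast
  qed
  then show "\<exists>y. ball y (min \<alpha> r / 2) \<subseteq> ball x \<alpha> \<and> ball y (min \<alpha> r / 2) \<subseteq> S"
    by (simp add: \<rho>_def)
qed

end
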